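(* Let $\triangle ABC$ be a nondegenerate triangle with circumradius $R$, circumscribed about a central conic with linear eccentricity $c$ (half the distance between the foci). (a) If the circumcenter of $\triangle ABC$ coincides with the center of the conic, then $3R^2>c^2$. (b) If the circumcenter of $\triangle ABC$ coincides with a focus of the conic, then $3R>2c$.
   Context: A central conic is a non-degenerate ellipse or hyperbola. A triangle is circumscribed about a conic if each of its three sidelines is tangent to the conic. *)

theory Defs
  imports "HOL-Analysis.Analysis"
begin

text \<open>Points of the Euclidean plane are vectors in real^2.
  A central conic is given by its center Oc, a unit vector u along the
  major (ellipse) resp. transverse (hyperbola) axis, semi-axes a, b > 0,
  and a flag hyp (True = hyperbola, False = ellipse, where then b \<le> a).\<close>

definition perp2 :: "real^2 \<Rightarrow> real^2" where
  "perp2 u = vector [- (u$2), u$1]"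

definition conic_fun :: "real^2 \<Rightarrow> real^2 \<Rightarrow> real \<Rightarrow> real \<Rightarrow> bool \<Rightarrow> real^2 \<Rightarrow> real" where
  "conic_fun Oc u a b hyp P =
     ((P - Oc) \<bullet> u)^2 / a^2 + (if hyp then -1 else 1) * ((P - Oc) \<bullet> perp2 u)^2 / b^2 - 1"

definition central_conic :: "real^2 \<Rightarrow> real \<Rightarrow> real \<Rightarrow> bool \<Rightarrow> bool" where
  "central_conic u a b hyp \<longleftrightarrow> norm u = 1 \<and> 0 < a \<and> 0 < b \<and> (\<not> hyp \<longrightarrow> b \<le> a)"

definition lin_ecc :: "real \<Rightarrow> real \<Rightarrow> bool \<Rightarrow> real" where
  "lin_ecc a b hyp = (if hyp then sqrt (a^2 + b^2) else sqrt (a^2 - b^2))"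

definition foci :: "real^2 \<Rightarrow> real^2 \<Rightarrow> real \<Rightarrow> real \<Rightarrow> bool \<Rightarrow> (real^2) set" where
  "foci Oc u a b hyp = {Oc + lin_ecc a b hyp *\<^sub>R u, Oc - lin_ecc a b hyp *\<^sub>R u}"

definition line_tangent :: "(real^2 \<Rightarrow> real) \<Rightarrow> real^2 \<Rightarrow> real^2 \<Rightarrow> bool" where
  "line_tangent f X Y \<longleftrightarrow>
     (\<exists>t::real. \<exists>D. let P = X + t *\<^sub>R (Y - X) in
        f P = 0 \<and> (f has_derivative D) (at P) \<and> D \<noteq> (\<lambda>_. 0) \<and> D (Y - X) = 0)"

definition circumscribed :: "real^2 \<Rightarrow> real^2 \<Rightarrow> real^2 \<Rightarrow> (real^2 \<Rightarrow> real) \<Rightarrow> bool" where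
  "circumscribed A B C f \<longleftrightarrow> line_tangent f A B \<and> line_tangent f B C \<and> line_tangent f C A"

end

theory Submission
  imports Defs
begin

lemma unit_facts:
  fixes u :: "real^2"
  assumes "norm u = 1"
  shows "u \<bullet> u = 1" "u$1^2 + u$2^2 = 1"
proof -
  have "u \<bullet> u = (norm u)^2" by (rule power2_norm_eq_inner[symmetric])
  thus uu: "u \<bullet> u = 1" using assms by simp
  have "u \<bullet> u = u$1^2 + u$2^2" by (simp add: inner_vec_def sum_2 power2_eq_square)
  thus "u$1^2 + u$2^2 = 1" using uu by simp
qed



lemma norm_frame:
  fixes u v :: "real^2"
  assumes "norm u = 1"
  shows "(v \<bullet> u)^2 + (v \<bullet> perp2 u)^2 = (norm v)^2"
proof -
  have "u$1^2 + u$2^2 = 1" by (rule unit_facts(2)[OF assms])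
  moreover have "(norm v)^2 = v$1^2 + v$2^2"
  proof -
    have "(norm v)^2 = v \<bullet> v" by (rule power2_norm_eq_inner)
    also have "\<dots> = v$1^2 + v$2^2" by (simp add: inner_vec_def sum_2 power2_eq_square)
    finally show ?thesis .
  qed
  moreover have "(v \<bullet> u)^2 + (v \<bullet> perp2 u)^2 = (v$1^2 + v$2^2) * (u$1^2 + u$2^2)"
    by (simp add: perp2_def inner_vec_def sum_2 power2_eq_square algebra_simps)
  ultimately show ?thesis by simp
qed

lemma conic_deriv:
  assumes "a \<noteq> 0" "b \<noteq> 0" shows "(conic_fun Oc u a b hyp has_derivative
     (\<lambda>h. 2*((P-Oc)\<bullet>u)*(h\<bullet>u)/a^2 + (if hyp then -1 else 1)*(2*((P-Oc)\<bullet>perp2 u)*(h\<bullet>perp2 u))/b^2)) (at P)"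
  unfolding conic_fun_def[abs_def]
  using assms by (auto intro!: derivative_eq_intros ext simp: field_simps power2_eq_square)

lemma lagr:
  fixes p1 p2 d1 d2 a b s :: real
  assumes a: "a > 0" and b: "b > 0" and s: "s = 1 \<or> s = -1"
    and h1: "p1^2/a^2 + s*p2^2/b^2 = 1" and h2: "p1*d1/a^2 + s*p2*d2/b^2 = 0"
  shows "(p2*d1 - p1*d2)^2 = a^2*d2^2 + s*b^2*d1^2"
proof -
  have gen: "(al*p1^2 + bt*p2^2) * (al*d1^2 + bt*d2^2) = (al*p1*d1 + bt*p2*d2)^2 + al*bt*(p2*d1 - p1*d2)^2" for al bt :: real
    by algebra
  have id: "(p1^2/a^2 + s*p2^2/b^2) * (d1^2/a^2 + s*d2^2/b^2) = (p1*d1/a^2 + s*p2*d2/b^2)^2 + (1/a^2)*(s/b^2)*(p2*d1 - p1*d2)^2"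
    using gen[of "1/a^2" "s/b^2"] by (simp add: algebra_simps)
  hence "d1^2/a^2 + s*d2^2/b^2 = (1/a^2)*(s/b^2)*(p2*d1 - p1*d2)^2" using h1 h2 by simp
  hence "b^2*d1^2 + s*a^2*d2^2 = s*(p2*d1 - p1*d2)^2" using a b by (simp add: field_simps)
  hence e: "s*(b^2*d1^2 + s*a^2*d2^2) = s * s *(p2*d1 - p1*d2)^2" by (simp only: mult.assoc)
  have ss: "s * s = 1" using s by auto
  have "(p2*d1 - p1*d2)^2 = s * s * (p2*d1 - p1*d2)^2" using ss by simp
  also have "\<dots> = s*(b^2*d1^2 + s*a^2*d2^2)" by (rule e[symmetric])
  also have "\<dots> = (s * s)*a^2*d2^2 + s*b^2*d1^2" by algebra
  also have "\<dots> = a^2*d2^2 + s*b^2*d1^2" using ss by simp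
  finally show ?thesis .
qed

lemma tangent_eq:
  assumes cc: "central_conic u a b hyp" and lt: "line_tangent (conic_fun Oc u a b hyp) X Y"
  shows "(((X-Oc)\<bullet>u)*((Y-Oc)\<bullet>perp2 u) - ((Y-Oc)\<bullet>u)*((X-Oc)\<bullet>perp2 u))^2
       = a^2*((Y-Oc)\<bullet>perp2 u - (X-Oc)\<bullet>perp2 u)^2 + ((if hyp then -1 else 1)*b^2)*((Y-Oc)\<bullet>u - (X-Oc)\<bullet>u)^2"
proof -
  define s :: real where "s = (if hyp then -1 else 1)"
  have s: "s = 1 \<or> s = -1" unfolding s_def by auto
  have a: "a > 0" and b: "b > 0" using cc unfolding central_conic_def by auto
  obtain t D where P: "conic_fun Oc u a b hyp (X + t *\<^sub>R (Y - X)) = 0"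
     "(conic_fun Oc u a b hyp has_derivative D) (at (X + t *\<^sub>R (Y - X)))" "D (Y - X) = 0"
    using lt unfolding line_tangent_def Let_def by blast
  define P where "P = X + t *\<^sub>R (Y - X)"
  define x1 where "x1 = (X-Oc)\<bullet>u"
  define x2 where "x2 = (X-Oc)\<bullet>perp2 u"
  define d1 where "d1 = (Y-Oc)\<bullet>u - (X-Oc)\<bullet>u"
  define d2 where "d2 = (Y-Oc)\<bullet>perp2 u - (X-Oc)\<bullet>perp2 u"
  have YX1: "(Y - X)\<bullet>u = d1" unfolding d1_def by (simp add: inner_diff_left)
  have YX2: "(Y - X)\<bullet>perp2 u = d2" unfolding d2_def by (simp add: inner_diff_left)
  have p1: "(P-Oc)\<bullet>u = x1 + t*d1" unfolding P_def x1_def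
    using YX1 by (simp add: inner_diff_left inner_add_left algebra_simps)
  have p2: "(P-Oc)\<bullet>perp2 u = x2 + t*d2" unfolding P_def x2_def
    using YX2 by (simp add: inner_diff_left inner_add_left algebra_simps)
  have DD: "D = (\<lambda>h. 2*((P-Oc)\<bullet>u)*(h\<bullet>u)/a^2 + (if hyp then -1 else 1)*(2*((P-Oc)\<bullet>perp2 u)*(h\<bullet>perp2 u))/b^2)"
    using has_derivative_unique[OF P(2)[folded P_def] conic_deriv] a b by simp
  have h2: "(x1 + t*d1)*d1/a^2 + s*(x2+t*d2)*d2/b^2 = 0"
    using P(3) a b unfolding DD p1 p2 YX1 YX2 s_def by (cases hyp) (simp_all add: field_simps)
  have h1: "(x1 + t*d1)^2/a^2 + s*(x2+t*d2)^2/b^2 = 1"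
    using P(1)[folded P_def] unfolding conic_fun_def p1 p2 s_def by simp
  have "((x2+t*d2)*d1 - (x1+t*d1)*d2)^2 = a^2*d2^2 + s*b^2*d1^2"
    by (rule lagr[OF a b s h1 h2])
  moreover have "(x1*((Y-Oc)\<bullet>perp2 u) - ((Y-Oc)\<bullet>u)*x2)^2 = ((x2+t*d2)*d1 - (x1+t*d1)*d2)^2"
    unfolding d1_def d2_def x1_def x2_def by (simp add: algebra_simps power2_eq_square)
  ultimately show ?thesis unfolding s_def x1_def x2_def d1_def d2_def by simp
qed


lemma idA: fixes x1 y1 x2 y2 r a E :: real assumes h1: "x1^2+y1^2 = r" and h2: "x2^2+y2^2 = r" shows "r*((x1*y2-x2*y1)^2 - (a^2*(y1-y2)^2 + E*(x1-x2)^2)) = (r - (x1*x2+y1*y2))*(r*(r+(x1*x2+y1*y2)) - (a^2+E)*r - (a^2-E)*(x1*x2-y1*y2))"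
proof -
  have g1: "y1^2 - r + x1^2 = 0" "y2^2-r+x2^2 = 0" using h1 h2 by auto
  have "r*((x1*y2-x2*y1)^2 - (a^2*(y1-y2)^2 + E*(x1-x2)^2)) - (r - (x1*x2+y1*y2))*(r*(r+(x1*x2+y1*y2)) - (a^2+E)*r - (a^2-E)*(x1*x2-y1*y2))
    = (-r*a^2 - y2^2*E + y2^2*a^2 + y2^2*r + x2^2*r)*(y1^2 - r + x1^2) + (-r*E + r^2 + x1^2*E - x1^2*a^2)*(y2^2-r+x2^2)"
    by algebra
  also have "\<dots> = 0" using g1 by simp
  finally show ?thesis by simp
qed

lemma idB: fixes x1 y1 x2 y2 r a E f :: real assumes h1: "x1^2+y1^2 = r" and h2: "x2^2+y2^2 = r" and h3: "f^2 = a^2 - E" shows "((x1+f)*y2-(x2+f)*y1)^2 - (a^2*(y1-y2)^2 + E*(x1-x2)^2) = 2*(r-(x1*x2+y1*y2))*((r+(x1*x2+y1*y2))/2 + f*(x1+x2) - E)"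
proof -
  have g1: "y1^2 - r + x1^2 = 0" "y2^2-r+x2^2 = 0" "f^2-a^2+E = 0" using h1 h2 h3 by auto
  have "((x1+f)*y2-(x2+f)*y1)^2 - (a^2*(y1-y2)^2 + E*(x1-x2)^2) - 2*(r-(x1*x2+y1*y2))*((r+(x1*x2+y1*y2))/2 + f*(x1+x2) - E)
    = (f^2 - a^2 + y2^2 + 2*x2*f + x2^2)*(y1^2 - r + x1^2) + (f^2 - a^2 + r + 2*x1*f)*(y2^2-r+x2^2) + (2*r - x2^2 - 2*y1*y2 - x1^2)*(f^2-a^2+E)"
    by algebra
  also have "\<dots> = 0" using g1 by simp
  finally show ?thesis by simp
qed

lemma re_as: "complex_of_real (Re w) = (w + cnj w) / 2"
  using complex_add_cnj[of w] by (simp add: field_simps)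

lemma Fpair:
  fixes V W :: complex and r C K :: real
  assumes r: "r > 0" and hV: "V * cnj V = of_real r" and hW: "W * cnj W = of_real r"
    and h: "r * Re (V * cnj W) - C * Re (V * W) = K"
  shows "of_real (r^2) * (V^2 + W^2) - of_real C * (V^2 * W^2 + of_real (r^2)) - 2 * of_real K * V * W = 0"
proof -
  have V0: "V \<noteq> 0" using hV r by auto
  have W0: "W \<noteq> 0" using hW r by auto
  have cV: "cnj V = of_real r / V" using hV V0 by (simp add: field_simps mult.commute)
  have cW: "cnj W = of_real r / W" using hW W0 by (simp add: field_simps mult.commute)
  have "of_real K = of_real r * of_real (Re (V * cnj W)) - of_real C * of_real (Re (V * W))"
    using h by (metis of_real_diff of_real_mult)
  also have "\<dots> = of_real r * ((V * cnj W + cnj V * W)/2) - of_real C * ((V*W + cnj V * cnj W)/2)"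
  proof -
    have a1: "complex_of_real (Re (V * cnj W)) = (V * cnj W + cnj V * W)/2"
      using re_as[of "V * cnj W"] by (simp only: complex_cnj_mult complex_cnj_cnj mult.commute)
    have a2: "complex_of_real (Re (V * W)) = (V * W + cnj V * cnj W)/2"
      using re_as[of "V * W"] by (simp only: complex_cnj_mult)
    show ?thesis by (simp only: a1 a2)
  qed
  also have "\<dots> = of_real r * ((V * (of_real r / W) + (of_real r / V) * W)/2) - of_real C * ((V*W + (of_real r / V) * (of_real r / W))/2)"
    by (simp add: cV cW)
  finally have e: "complex_of_real K = \<dots>" .
  show ?thesis using V0 W0 unfolding e by (simp add: field_simps power2_eq_square)
qed

lemma core_cplx:
  fixes X Y Z :: complex and r C K :: real
  assumes r: "r > 0" and hX: "X * cnj X = of_real r" and hY: "Y * cnj Y = of_real r" and hZ: "Z * cnj Z = of_real r"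
    and dXY: "X \<noteq> Y" and dYZ: "Y \<noteq> Z" and dXZ: "X \<noteq> Z"
    and eXY: "r * Re (X * cnj Y) - C * Re (X * Y) = K"
    and eYZ: "r * Re (Y * cnj Z) - C * Re (Y * Z) = K"
    and eXZ: "r * Re (X * cnj Z) - C * Re (X * Z) = K"
  shows "of_real (r^2) * (X + Y + Z) + of_real C * (X * Y * Z) = 0"
proof -
  define s where "s = complex_of_real (r^2)"
  define c where "c = complex_of_real C"
  define k where "k = complex_of_real K"
  define F where "F = (\<lambda>V W. s * (V^2 + W^2) - c * (V^2 * W^2 + s) - 2 * k * V * W)"
  have FXY: "F X Y = 0" unfolding F_def s_def c_def k_def using Fpair[OF r hX hY eXY] by simp
  have FYZ: "F Y Z = 0" unfolding F_def s_def c_def k_def using Fpair[OF r hY hZ eYZ] by simp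
  have FXZ: "F X Z = 0" unfolding F_def s_def c_def k_def using Fpair[OF r hX hZ eXZ] by simp
  define G where "G = (\<lambda>V W U. (s - c * U^2) * (V + W) - 2 * k * U)"
  have "F X Y - F Z Y = (X - Z) * G X Z Y" unfolding F_def G_def by algebra
  moreover have "F X Y = F Z Y" using FXY FYZ unfolding F_def by algebra
  ultimately have GY: "G X Z Y = 0" using dXZ by simp
  have "F Y X - F Z X = (Y - Z) * G Y Z X" unfolding F_def G_def by algebra
  moreover have "F Y X = F Z X" using FXY FXZ unfolding F_def by algebra
  ultimately have GX: "G Y Z X = 0" using dYZ by simp
  define L where "L = s + c * (X*Y + Y*Z + Z*X) + 2 * k"
  have "G X Z Y - G Y Z X = (X - Y) * L" unfolding G_def L_def by algebra
  hence L0: "L = 0" using GX GY dXY by simp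
  have "G X Z Y = s * (X + Y + Z) + c * (X * Y * Z) - Y * L" unfolding G_def L_def by algebra
  hence "s * (X + Y + Z) + c * (X * Y * Z) = 0" using GY L0 by simp
  thus ?thesis unfolding s_def c_def by simp
qed

lemma sum3_lt:
  fixes X Y Z :: complex
  assumes "norm X = R" "norm Y = R" "norm Z = R" "X \<noteq> Y"
  shows "norm (X + Y + Z) < 3 * R"
proof -
  have xx: "X \<bullet> X = R^2" "Y \<bullet> Y = R^2" using assms by (metis power2_norm_eq_inner)+
  have "0 < norm (X - Y)" using assms by simp
  hence "0 < (norm (X - Y))^2" by simp
  hence "0 < R^2 + R^2 - 2 * inner X Y"
    using xx by (simp add: power2_norm_eq_inner inner_diff_left inner_diff_right inner_commute)
  hence "(norm (X + Y))^2 < (2*R)^2"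
    using xx by (simp add: power2_norm_eq_inner inner_add_left inner_add_right inner_commute power_mult_distrib)
  hence "norm (X + Y) < 2 * R" using assms(1) by (smt (verit) norm_ge_zero power_mono)
  moreover have "norm (X + Y + Z) \<le> norm (X + Y) + norm Z" by (rule norm_triangle_ineq)
  ultimately show ?thesis using assms by simp
qed

lemma cplx_facts:
  fixes x y R :: real
  assumes "x^2 + y^2 = R^2" "R \<ge> 0"
  shows "Complex x y * cnj (Complex x y) = of_real (R^2)" "norm (Complex x y) = R"
  using assms by (simp_all add: complex_mult_cnj complex_norm)

lemma cplx_ne:
  fixes x1 y1 x2 y2 :: real
  assumes "(x1-x2)^2 + (y1-y2)^2 \<noteq> 0"
  shows "Complex x1 y1 \<noteq> Complex x2 y2"
  using assms by auto

lemma coreA: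
  fixes x1 y1 x2 y2 x3 y3 R a E :: real
  assumes R: "R > 0"
    and c1: "x1^2 + y1^2 = R^2" and c2: "x2^2 + y2^2 = R^2" and c3: "x3^2 + y3^2 = R^2"
    and d12: "(x1-x2)^2 + (y1-y2)^2 \<noteq> 0" and d23: "(x2-x3)^2 + (y2-y3)^2 \<noteq> 0"
    and d13: "(x1-x3)^2 + (y1-y3)^2 \<noteq> 0"
    and T12: "(x1*y2 - x2*y1)^2 = a^2*(y2-y1)^2 + E*(x2-x1)^2"
    and T23: "(x2*y3 - x3*y2)^2 = a^2*(y3-y2)^2 + E*(x3-x2)^2"
    and T31: "(x3*y1 - x1*y3)^2 = a^2*(y1-y3)^2 + E*(x1-x3)^2"
  shows "a^2 - E < 3 * R^2"
proof -
  define r where "r = R^2"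
  have r: "r > 0" unfolding r_def using R by simp
  define K where "K = (a^2+E)*r - r^2"
  have bil: "r*(p1*q1+p2*q2) - (a^2-E)*(p1*q1 - p2*q2) = K"
    if h1: "p1^2+p2^2 = r" and h2: "q1^2+q2^2 = r" and d: "(p1-q1)^2+(p2-q2)^2 \<noteq> 0"
    and T: "(p1*q2 - q1*p2)^2 = a^2*(p2-q2)^2 + E*(p1-q1)^2" for p1 p2 q1 q2
  proof -
    have z: "r*((p1*q2-q1*p2)^2 - (a^2*(p2-q2)^2 + E*(p1-q1)^2)) = 0" using T by simp
    have "(p1-q1)^2+(p2-q2)^2 = (p1^2+p2^2) + (q1^2+q2^2) - 2*(p1*q1+p2*q2)" by algebra
    hence "(p1-q1)^2+(p2-q2)^2 = 2*(r - (p1*q1+p2*q2))" using h1 h2 by simp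
    hence nz: "r - (p1*q1+p2*q2) \<noteq> 0" using d by auto
    have "(r - (p1*q1+p2*q2))*(r*(r+(p1*q1+p2*q2)) - (a^2+E)*r - (a^2-E)*(p1*q1-p2*q2)) = 0"
      using idA[OF h1 h2, of a E] z by simp
    hence "r*(r+(p1*q1+p2*q2)) - (a^2+E)*r - (a^2-E)*(p1*q1-p2*q2) = 0" using nz by simp
    thus ?thesis unfolding K_def by (simp add: algebra_simps power2_eq_square)
  qed
  have b12: "r*(x1*x2+y1*y2) - (a^2-E)*(x1*x2 - y1*y2) = K"
    by (rule bil) (use c1 c2 d12 T12 in \<open>auto simp: r_def power2_commute\<close>)
  have b23: "r*(x2*x3+y2*y3) - (a^2-E)*(x2*x3 - y2*y3) = K"
    by (rule bil) (use c2 c3 d23 T23 in \<open>auto simp: r_def power2_commute\<close>)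
  have b13: "r*(x1*x3+y1*y3) - (a^2-E)*(x1*x3 - y1*y3) = K"
  proof (rule bil)
    show "(x1 * y3 - x3 * y1)\<^sup>2 = a\<^sup>2 * (y1 - y3)\<^sup>2 + E * (x1 - x3)\<^sup>2"
      using T31 by (simp add: power2_commute)
  qed (use c1 c3 d13 in \<open>auto simp: r_def\<close>)
  define X where "X = Complex x1 y1"
  define Y where "Y = Complex x2 y2"
  define Z where "Z = Complex x3 y3"
  have hX: "X * cnj X = of_real r" "norm X = R" unfolding X_def r_def using cplx_facts[OF c1] R by auto
  have hY: "Y * cnj Y = of_real r" "norm Y = R" unfolding Y_def r_def using cplx_facts[OF c2] R by auto
  have hZ: "Z * cnj Z = of_real r" "norm Z = R" unfolding Z_def r_def using cplx_facts[OF c3] R by auto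
  have dXY: "X \<noteq> Y" unfolding X_def Y_def using cplx_ne[OF d12] .
  have dYZ: "Y \<noteq> Z" unfolding Y_def Z_def using cplx_ne[OF d23] .
  have dXZ: "X \<noteq> Z" unfolding X_def Z_def using cplx_ne[OF d13] .
  have main: "of_real (r^2) * (X + Y + Z) + of_real (a^2-E) * (X * Y * Z) = 0"
    by (rule core_cplx[OF r hX(1) hY(1) hZ(1) dXY dYZ dXZ])
       (use b12 b23 b13 in \<open>simp_all add: X_def Y_def Z_def\<close>)
  hence "norm (of_real (r^2) * (X + Y + Z)) = norm (of_real (a^2-E) * (X * Y * Z))"
    by (simp add: eq_neg_iff_add_eq_0[symmetric])
  moreover have n1: "norm (complex_of_real (r^2)) = r^2" by (simp only: norm_of_real) simp
  moreover have n2: "norm (complex_of_real (a^2-E)) = \<bar>a^2-E\<bar>" by (simp only: norm_of_real)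
  ultimately have "r^2 * norm (X + Y + Z) = \<bar>a^2 - E\<bar> * (R * R * R)"
    by (simp only: norm_mult hX(2) hY(2) hZ(2))
  hence "r^2 * norm (X + Y + Z) = \<bar>a^2 - E\<bar> * R^3" by (simp add: power3_eq_cube)
  hence "R^4 * norm (X + Y + Z) = \<bar>a^2 - E\<bar> * R^3" unfolding r_def by (simp add: power_mult [symmetric])
  hence eq: "R * norm (X + Y + Z) = \<bar>a^2 - E\<bar>" using R by (simp add: power_def field_simps)
  have "norm (X + Y + Z) < 3 * R" by (rule sum3_lt[OF hX(2) hY(2) hZ(2) dXY])
  hence "R * norm (X + Y + Z) < R * (3 * R)" using R by simp
  thus ?thesis using eq by (simp add: power2_eq_square)
qed



lemma coreB:
  fixes x1 y1 x2 y2 x3 y3 R a E f :: real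
  assumes R: "R > 0" and fE: "f^2 = a^2 - E"
    and c1: "(x1-f)^2 + y1^2 = R^2" and c2: "(x2-f)^2 + y2^2 = R^2" and c3: "(x3-f)^2 + y3^2 = R^2"
    and d12: "(x1-x2)^2 + (y1-y2)^2 \<noteq> 0" and d23: "(x2-x3)^2 + (y2-y3)^2 \<noteq> 0"
    and d13: "(x1-x3)^2 + (y1-y3)^2 \<noteq> 0"
    and det: "(x1-x2)*(y3-y2) - (y1-y2)*(x3-x2) \<noteq> 0"
    and T12: "(x1*y2 - x2*y1)^2 = a^2*(y2-y1)^2 + E*(x2-x1)^2"
    and T23: "(x2*y3 - x3*y2)^2 = a^2*(y3-y2)^2 + E*(x3-x2)^2"
    and T31: "(x3*y1 - x1*y3)^2 = a^2*(y1-y3)^2 + E*(x1-x3)^2"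
  shows "2 * \<bar>f\<bar> < 3 * R"
proof -
  define r where "r = R^2"
  define u1 where "u1 = x1 - f"
  define u2 where "u2 = x2 - f"
  define u3 where "u3 = x3 - f"
  have bil: "(p1*q1+p2*q2) + 2*f*(p1+q1) = 2*E - r"
    if h1: "p1^2+p2^2 = r" and h2: "q1^2+q2^2 = r" and d: "(p1-q1)^2+(p2-q2)^2 \<noteq> 0"
    and T: "((p1+f)*q2 - (q1+f)*p2)^2 = a^2*(p2-q2)^2 + E*(p1-q1)^2" for p1 p2 q1 q2
  proof -
    have "(p1-q1)^2+(p2-q2)^2 = (p1^2+p2^2) + (q1^2+q2^2) - 2*(p1*q1+p2*q2)" by algebra
    hence "(p1-q1)^2+(p2-q2)^2 = 2*(r - (p1*q1+p2*q2))" using h1 h2 by simp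
    hence nz: "r - (p1*q1+p2*q2) \<noteq> 0" using d by auto
    have "2*(r-(p1*q1+p2*q2))*((r+(p1*q1+p2*q2))/2 + f*(p1+q1) - E) = 0"
      using idB[OF h1 h2 fE] T by simp
    hence "(r+(p1*q1+p2*q2))/2 + f*(p1+q1) - E = 0" using nz by simp
    thus ?thesis by (simp add: field_simps)
  qed
  have b12: "(u1*u2+y1*y2) + 2*f*(u1+u2) = 2*E - r"
    by (rule bil) (use c1 c2 d12 T12 in \<open>auto simp: r_def u1_def u2_def power2_commute\<close>)
  have b23: "(u2*u3+y2*y3) + 2*f*(u2+u3) = 2*E - r"
    by (rule bil) (use c2 c3 d23 T23 in \<open>auto simp: r_def u2_def u3_def power2_commute\<close>)
  have b13: "(u1*u3+y1*y3) + 2*f*(u1+u3) = 2*E - r"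
  proof (rule bil)
    show "((u1 + f) * y3 - (u3 + f) * y1)\<^sup>2 = a\<^sup>2 * (y1 - y3)\<^sup>2 + E * (u1 - u3)\<^sup>2"
      using T31 unfolding u1_def u3_def by (simp add: power2_commute)
  qed (use c1 c3 d13 in \<open>auto simp: r_def u1_def u3_def\<close>)
  have cc1: "u1^2 + y1^2 = r" and cc2: "u2^2+y2^2 = r" and cc3: "u3^2+y3^2 = r"
    using c1 c2 c3 unfolding r_def u1_def u2_def u3_def by auto
  define h1 where "h1 = u1+u2+u3+2*f"
  define h2 where "h2 = y1+y2+y3"
  have "(u1-u2)*h1 + (y1-y2)*h2 = ((u1*u3+y1*y3) + 2*f*(u1+u3)) - ((u2*u3+y2*y3) + 2*f*(u2+u3)) + (u1^2+y1^2) - (u2^2+y2^2)"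
    unfolding h1_def h2_def by algebra
  hence e1: "(u1-u2)*h1 + (y1-y2)*h2 = 0" using b13 b23 cc1 cc2 by simp
  have "(u3-u2)*h1 + (y3-y2)*h2 = ((u1*u3+y1*y3) + 2*f*(u1+u3)) - ((u1*u2+y1*y2) + 2*f*(u1+u2)) + (u3^2+y3^2) - (u2^2+y2^2)"
    unfolding h1_def h2_def by algebra
  hence e2: "(u3-u2)*h1 + (y3-y2)*h2 = 0" using b13 b12 cc3 cc2 by simp
  define dt where "dt = (x1-x2)*(y3-y2) - (y1-y2)*(x3-x2)"
  have "dt * h1 = (y3-y2)*((u1-u2)*h1 + (y1-y2)*h2) - (y1-y2)*((u3-u2)*h1 + (y3-y2)*h2)"
    unfolding dt_def u1_def u2_def u3_def by algebra
  hence "dt * h1 = 0" using e1 e2 by simp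
  hence H1: "h1 = 0" using det unfolding dt_def by simp
  have "dt * h2 = (u1-u2)*((u3-u2)*h1 + (y3-y2)*h2) - (u3-u2)*((u1-u2)*h1 + (y1-y2)*h2)"
    unfolding dt_def u1_def u2_def u3_def by algebra
  hence "dt * h2 = 0" using e1 e2 by simp
  hence H2: "h2 = 0" using det unfolding dt_def by simp
  define X where "X = Complex u1 y1"
  define Y where "Y = Complex u2 y2"
  define Z where "Z = Complex u3 y3"
  have nX: "norm X = R" unfolding X_def using cplx_facts(2)[of u1 y1 R] cc1 R r_def by auto
  have nY: "norm Y = R" unfolding Y_def using cplx_facts(2)[of u2 y2 R] cc2 R r_def by auto
  have nZ: "norm Z = R" unfolding Z_def using cplx_facts(2)[of u3 y3 R] cc3 R r_def by auto
  have dXY: "X \<noteq> Y" unfolding X_def Y_def u1_def u2_def using d12 by auto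
  have "X + Y + Z = Complex (-2*f) 0" unfolding X_def Y_def Z_def using H1 H2 unfolding h1_def h2_def
    by (simp add: complex_eq_iff)
  hence "norm (X + Y + Z) = sqrt ((2*f)^2)" by (simp add: complex_norm power_mult_distrib)
  hence "norm (X + Y + Z) = 2 * \<bar>f\<bar>" by (simp only: real_sqrt_abs abs_mult)
  moreover have "norm (X + Y + Z) < 3 * R" by (rule sum3_lt[OF nX nY nZ dXY])
  ultimately show ?thesis by simp
qed
lemma noncol_cross:
  fixes A B C :: "real^2"
  assumes "\<not> collinear {A, B, C}"
  shows "(A-B)$1*(C-B)$2 - (A-B)$2*(C-B)$1 \<noteq> 0"
proof
  assume h: "(A-B)$1*(C-B)$2 - (A-B)$2*(C-B)$1 = 0"
  define v where "v = A - B"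
  define w where "w = C - B"
  have h': "v$1*w$2 = v$2*w$1" using h unfolding v_def w_def by simp
  have "collinear {0, v, w}"
  proof (cases "v = 0")
    case True thus ?thesis by (simp add: collinear_lemma)
  next
    case False
    hence "v$1 \<noteq> 0 \<or> v$2 \<noteq> 0" by (metis exhaust_2 vec_eq_iff zero_index)
    thus ?thesis
    proof
      assume v1: "v$1 \<noteq> 0"
      have "w = (w$1/v$1) *\<^sub>R v" unfolding vec_eq_iff forall_2 using v1 h'
        by (simp add: field_simps)
      thus ?thesis unfolding collinear_lemma by blast
    next
      assume v2: "v$2 \<noteq> 0"
      have "w = (w$2/v$2) *\<^sub>R v" unfolding vec_eq_iff forall_2 using v2 h'
        by (simp add: field_simps)
      thus ?thesis unfolding collinear_lemma by blast
    qed
  qed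
  moreover have "collinear {A, B, C} = collinear {0, v, w}"
    unfolding v_def w_def by (rule collinear_3) (simp add: NO_MATCH_def)
  ultimately have "collinear {A, B, C}" by simp
  thus False using assms by simp
qed

lemma frame_cross:
  fixes u v w :: "real^2"
  assumes "norm u = 1"
  shows "(v\<bullet>u)*(w\<bullet>perp2 u) - (v\<bullet>perp2 u)*(w\<bullet>u) = v$1*w$2 - v$2*w$1"
proof -
  have "(v\<bullet>u)*(w\<bullet>perp2 u) - (v\<bullet>perp2 u)*(w\<bullet>u) = (v$1*w$2 - v$2*w$1) * (u$1^2 + u$2^2)"
    by (simp add: perp2_def inner_vec_def sum_2 power2_eq_square algebra_simps)
  thus ?thesis using unit_facts(2)[OF assms] by simp
qed

lemma perp_facts:
  fixes u :: "real^2"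
  assumes "norm u = 1"
  shows "u \<bullet> u = 1" "u \<bullet> perp2 u = 0"
proof -
  show "u \<bullet> u = 1" using unit_facts(1)[OF assms] .
  show "u \<bullet> perp2 u = 0" by (simp add: perp2_def inner_vec_def sum_2 algebra_simps)
qed

theorem lemma2p1:
  fixes A B C Z Oc u :: "real^2" and R a b :: real and hyp :: bool
  assumes "\<not> collinear {A, B, C}"
    and "dist Z A = R" and "dist Z B = R" and "dist Z C = R"
    and "central_conic u a b hyp"
    and "circumscribed A B C (conic_fun Oc u a b hyp)"
  shows "(Z = Oc \<longrightarrow> 3 * R^2 > (lin_ecc a b hyp)^2)
       \<and> (Z \<in> foci Oc u a b hyp \<longrightarrow> 3 * R > 2 * lin_ecc a b hyp)"
proof -
  note ncol = assms(1) and cc = assms(5)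
  have nu: "norm u = 1" and a: "a > 0" and b: "b > 0" and ba: "\<not> hyp \<longrightarrow> b \<le> a"
    using cc unfolding central_conic_def by auto
  define E where "E = (if hyp then -1 else 1) * b^2"
  define c where "c = lin_ecc a b hyp"
  have c2: "c^2 = a^2 - E"
  proof (cases hyp)
    case True thus ?thesis unfolding c_def E_def lin_ecc_def by (simp add: add_pos_pos)
  next
    case False
    hence "b \<le> a" using ba by simp
    hence "b^2 \<le> a^2" using b by (simp add: power_mono)
    thus ?thesis using False unfolding c_def E_def lin_ecc_def by simp
  qed
  have c0: "c \<ge> 0" unfolding c_def lin_ecc_def using ba b by (cases hyp) (simp_all add: power_mono)
  define fx where "fx P = (P - Oc) \<bullet> u" for P
  define fy where "fy P = (P - Oc) \<bullet> perp2 u" for P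
  have tg: "line_tangent (conic_fun Oc u a b hyp) A B" "line_tangent (conic_fun Oc u a b hyp) B C"
    "line_tangent (conic_fun Oc u a b hyp) C A" using assms(6) unfolding circumscribed_def by auto
  have TAB: "(fx A * fy B - fx B * fy A)^2 = a^2*(fy B - fy A)^2 + E*(fx B - fx A)^2"
    using tangent_eq[OF cc tg(1)] unfolding fx_def fy_def E_def .
  have TBC: "(fx B * fy C - fx C * fy B)^2 = a^2*(fy C - fy B)^2 + E*(fx C - fx B)^2"
    using tangent_eq[OF cc tg(2)] unfolding fx_def fy_def E_def .
  have TCA: "(fx C * fy A - fx A * fy C)^2 = a^2*(fy A - fy C)^2 + E*(fx A - fx C)^2"
    using tangent_eq[OF cc tg(3)] unfolding fx_def fy_def E_def .
  have dfx: "fx P - fx Q = (P - Q) \<bullet> u" for P Q unfolding fx_def by (simp add: inner_diff_left)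
  have dfy: "fy P - fy Q = (P - Q) \<bullet> perp2 u" for P Q unfolding fy_def by (simp add: inner_diff_left)
  have sq: "(fx P - fx Q)^2 + (fy P - fy Q)^2 = (norm (P - Q))^2" for P Q
    unfolding dfx dfy by (rule norm_frame[OF nu])
  have AB: "A \<noteq> B"
  proof
    assume "A = B"
    hence "{A, B, C} = {A, C}" by auto
    thus False using ncol by (simp add: collinear_2)
  qed
  have BC: "B \<noteq> C"
  proof
    assume "B = C"
    hence "{A, B, C} = {B, A}" by auto
    thus False using ncol by (simp add: collinear_2)
  qed
  have AC: "A \<noteq> C"
  proof
    assume "A = C"
    hence "{A, B, C} = {A, B}" by auto
    thus False using ncol by (simp add: collinear_2)
  qed
  have dAB: "(fx A - fx B)^2 + (fy A - fy B)^2 \<noteq> 0" unfolding sq using AB by simp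
  have dBC: "(fx B - fx C)^2 + (fy B - fy C)^2 \<noteq> 0" unfolding sq using BC by simp
  have dAC: "(fx A - fx C)^2 + (fy A - fy C)^2 \<noteq> 0" unfolding sq using AC by simp
  have det: "(fx A - fx B)*(fy C - fy B) - (fy A - fy B)*(fx C - fx B) \<noteq> 0"
    unfolding dfx dfy frame_cross[OF nu] using noncol_cross[OF ncol] .
  have R: "R > 0"
  proof -
    have "R \<ge> 0" using assms(2) by auto
    moreover have "R \<noteq> 0" using assms(2,3) AB by auto
    ultimately show ?thesis by simp
  qed
  have circ: "(norm (P - Z))^2 = R^2" if "dist Z P = R" for P
    using that by (simp add: dist_norm norm_minus_commute)
  have partA: "3 * R^2 > c^2" if Z: "Z = Oc"
  proof -
    have cr: "fx P ^2 + fy P ^2 = R^2" if "dist Z P = R" for P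
      using norm_frame[OF nu, of "P - Oc"] circ[OF that] unfolding fx_def fy_def Z by simp
    have "a^2 - E < 3 * R^2"
      by (rule coreA[OF R cr[OF assms(2)] cr[OF assms(3)] cr[OF assms(4)] dAB dBC dAC TAB TBC TCA])
    thus ?thesis using c2 by simp
  qed
  have partB: "3 * R > 2 * c" if Z: "Z \<in> foci Oc u a b hyp"
  proof -
    obtain f where f: "Z = Oc + f *\<^sub>R u" and fc: "\<bar>f\<bar> = c"
    proof -
      have "Z \<in> {Oc + c *\<^sub>R u, Oc - c *\<^sub>R u}" using Z unfolding foci_def c_def .
      hence "Z = Oc + c *\<^sub>R u \<or> Z = Oc - c *\<^sub>R u" by blast
      thus ?thesis
      proof
        assume "Z = Oc + c *\<^sub>R u" thus ?thesis using that[of c] c0 by simp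
      next
        assume "Z = Oc - c *\<^sub>R u" thus ?thesis using that[of "-c"] c0 by simp
      qed
    qed
    have "c^2 = f^2" unfolding fc[symmetric] by simp
    hence fE: "f^2 = a^2 - E" using c2 by linarith
    have cr: "(fx P - f)^2 + fy P ^2 = R^2" if "dist Z P = R" for P
    proof -
      have PZ: "P - Z = (P - Oc) - f *\<^sub>R u" unfolding f by simp
      have e1: "(P - Z) \<bullet> u = fx P - f" unfolding PZ fx_def inner_diff_left inner_scaleR_left perp_facts(1)[OF nu] by simp
      have e2: "(P - Z) \<bullet> perp2 u = fy P" unfolding PZ fy_def inner_diff_left inner_scaleR_left perp_facts(2)[OF nu] by simp
      have n: "((P - Z) \<bullet> u)^2 + ((P - Z) \<bullet> perp2 u)^2 = R^2"
        using norm_frame[OF nu, of "P - Z"] circ[OF that] by simp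
      show ?thesis using n unfolding e1 e2 .
    qed
    have "2 * \<bar>f\<bar> < 3 * R"
      by (rule coreB[OF R fE cr[OF assms(2)] cr[OF assms(3)] cr[OF assms(4)] dAB dBC dAC det TAB TBC TCA])
    thus ?thesis using fc by simp
  qed
  show ?thesis using partA partB unfolding c_def by blast
qed

end
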